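(* Let $(\mathcal{B}_1,\mathcal{B}_0)$ be a Rota-Baxter operator on a crossed module of Lie groups $(H,G,t,\Phi)$, and let $\mathcal{C}$ be the small category associated with $(H,G,t,\Phi)$ (see context). Define $R_0:\mathcal{C}_0\times\mathcal{C}_0\to\mathcal{C}_0\times\mathcal{C}_0$ and $R_1:\mathcal{C}_1\times\mathcal{C}_1\to\mathcal{C}_1\times\mathcal{C}_1$ by $$R_0(c,d)=\Big(\mathrm{Ad}_{\mathcal{B}_0(c)}d,\ \mathrm{Ad}_{\mathcal{B}_0(\mathrm{Ad}_{\mathcal{B}_0(c)}d)^{-1}(\mathrm{Ad}_{\mathcal{B}_0(c)}d)^{-1}}\,c\Big),$$ $$R_1(X,Y)=\Big(\mathrm{Ad}_{\mathcal{B}(X)}Y,\ \mathrm{Ad}_{\mathcal{B}(\mathrm{Ad}_{\mathcal{B}(X)}Y)^{-1}(\mathrm{Ad}_{\mathcal{B}(X)}Y)^{-1}}\,X\Big),\quad X,Y\in G\times H,$$ where in $R_0$ the operations are in $G$, in $R_1$ they are in the semi-direct product group $(G\ltimes_\Phi H,\cdot_\Phi)$, $\mathrm{Ad}_gh=ghg^{-1}$, and $\mathcal{B}(a,p)=\big(\mathcal{B}_0(a),\ \Phi(\mathcal{B}_0(a))\mathcal{B}_1(\Phi(\mathcal{B}_0(a)^{-1}a^{-1})p)\big)$. Then $R=(R_1,R_0):\mathcal{C}\times\mathcal{C}\to\mathcal{C}\times\mathcal{C}$ is an invertible functor satisfying $$(R\times\mathrm{Id}_{\mathcal{C}})(\mathrm{Id}_{\mathcal{C}}\times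 R)(R\times\mathrm{Id}_{\mathcal{C}})=(\mathrm{Id}_{\mathcal{C}}\times R)(R\times\mathrm{Id}_{\mathcal{C}})(\mathrm{Id}_{\mathcal{C}}\times R),$$ i.e. $(\mathcal{C},R)$ is a categorical solution of the Yang-Baxter equation.
   Context: A crossed module of Lie groups is a quadruple $(H,G,t,\Phi)$ where $H,G$ are Lie groups, $t:H\to G$ is a Lie group homomorphism and $\Phi:G\to\mathrm{Aut}(H)$ is a smooth action of $G$ on $H$ by automorphisms such that $\Phi(t(p))q=pqp^{-1}$ and $t(\Phi(a)p)=a\,t(p)\,a^{-1}$ for all $p,q\in H$, $a\in G$. A Rota-Baxter operator on a Lie group $G$ is a smooth map $\mathcal{B}:G\to G$ with $\mathcal{B}(a)\mathcal{B}(b)=\mathcal{B}(a\mathcal{B}(a)b\mathcal{B}(a)^{-1})$ for all $a,b\in G$. A Rota-Baxter operator on a crossed module of Lie groups $(H,G,t,\Phi)$ is a pair $(\mathcal{B}_1,\mathcal{B}_0)$ of smooth maps $\mathcal{B}_1:H\to H$, $\mathcal{B}_0:G\to G$ such that (i) $\mathcal{B}_1,\mathcal{B}_0$ are Rota-Baxter operators on $H$, $G$; (ii) $t\circ\mathcal{B}_1=\mathcal{B}_0\circ t$; (iii) $\Phi(\mathcal{B}_0(a))\mathcal{B}_1(p)=\mathcal{B}_1\big(\Phi(a\mathcal{B}_0(a))(p\mathcal{B}_1(p))\cdot\Phi(\mathcal{B}_0(a))\mathcal{B}_1(p)^{-1}\big)$ for all $a\in G,p\in H$. The small category $\mathcal{C}$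 associated with $(H,G,t,\Phi)$: objects $\mathcal{C}_0=G$, morphisms $\mathcal{C}_1=G\times H$, source $\mathfrak{s}(a,p)=a$, target $\mathfrak{t}(a,p)=t(p)a$, composition $(a,p)\circ(b,q)=(b,pq)$ whenever $t(q)b=a$, identities $1_a=(a,e_H)$. The semi-direct product $(G\ltimes_\Phi H,\cdot_\Phi)$ is $G\times H$ with $(a,p)\cdot_\Phi(b,q)=(ab,p\Phi(a)q)$. $\mathcal{C}\times\mathcal{C}$ is the product category. A categorical solution of the Yang-Baxter equation is a pair $(\mathcal{C},R)$ with $\mathcal{C}$ a small category and $R:\mathcal{C}\times\mathcal{C}\to\mathcal{C}\times\mathcal{C}$ an invertible functor satisfying the displayed braid relation. *)

theory Defs
  imports "HOL-Algebra.Algebra"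
begin

text \<open>Smoothness is not modelled; all structures are abstract groups.\<close>

definition crossed_module ::
  "('h, 'c) monoid_scheme \<Rightarrow> ('g, 'd) monoid_scheme \<Rightarrow> ('h \<Rightarrow> 'g) \<Rightarrow> ('g \<Rightarrow> 'h \<Rightarrow> 'h) \<Rightarrow> bool"
  where
  "crossed_module H G t Phi \<longleftrightarrow>
     group H \<and> group G \<and> t \<in> hom H G \<and>
     (\<forall>a\<in>carrier G. Phi a \<in> iso H H) \<and>
     (\<forall>a\<in>carrier G. \<forall>b\<in>carrier G. \<forall>p\<in>carrier H. Phi (a \<otimes>\<^bsub>G\<^esub> b) p = Phi a (Phi b p)) \<and>
     (\<forall>p\<in>carrier H. Phi \<one>\<^bsub>G\<^esub> p = p) \<and>
     (\<forall>p\<in>carrier H. \<forall>q\<in>carrier H. Phi (t p) q = p \<otimes>\<^bsub>H\<^esub> q \<otimes>\<^bsub>H\<^esub> inv\<^bsub>H\<^esub> p) \<and>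
     (\<forall>a\<in>carrier G. \<forall>p\<in>carrier H. t (Phi a p) = a \<otimes>\<^bsub>G\<^esub> t p \<otimes>\<^bsub>G\<^esub> inv\<^bsub>G\<^esub> a)"

definition rota_baxter :: "('g, 'd) monoid_scheme \<Rightarrow> ('g \<Rightarrow> 'g) \<Rightarrow> bool" where
  "rota_baxter G B \<longleftrightarrow> B \<in> carrier G \<rightarrow> carrier G \<and>
     (\<forall>a\<in>carrier G. \<forall>b\<in>carrier G.
        B a \<otimes>\<^bsub>G\<^esub> B b = B (a \<otimes>\<^bsub>G\<^esub> B a \<otimes>\<^bsub>G\<^esub> b \<otimes>\<^bsub>G\<^esub> inv\<^bsub>G\<^esub> (B a)))"

definition rota_baxter_cm ::
  "('h, 'c) monoid_scheme \<Rightarrow> ('g, 'd) monoid_scheme \<Rightarrow> ('h \<Rightarrow> 'g) \<Rightarrow> ('g \<Rightarrow> 'h \<Rightarrow> 'h)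
   \<Rightarrow> ('h \<Rightarrow> 'h) \<Rightarrow> ('g \<Rightarrow> 'g) \<Rightarrow> bool" where
  "rota_baxter_cm H G t Phi B1 B0 \<longleftrightarrow>
     rota_baxter H B1 \<and> rota_baxter G B0 \<and>
     (\<forall>p\<in>carrier H. t (B1 p) = B0 (t p)) \<and>
     (\<forall>a\<in>carrier G. \<forall>p\<in>carrier H.
        Phi (B0 a) (B1 p) =
        B1 (Phi (a \<otimes>\<^bsub>G\<^esub> B0 a) (p \<otimes>\<^bsub>H\<^esub> B1 p) \<otimes>\<^bsub>H\<^esub> inv\<^bsub>H\<^esub> (Phi (B0 a) (B1 p))))"

definition semidirect ::
  "('g, 'd) monoid_scheme \<Rightarrow> ('h, 'c) monoid_scheme \<Rightarrow> ('g \<Rightarrow> 'h \<Rightarrow> 'h) \<Rightarrow> ('g \<times> 'h) monoid" where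
  "semidirect G H Phi =
     \<lparr> carrier = carrier G \<times> carrier H,
       monoid.mult = (\<lambda>(a, p) (b, q). (a \<otimes>\<^bsub>G\<^esub> b, p \<otimes>\<^bsub>H\<^esub> Phi a q)),
       monoid.one = (\<one>\<^bsub>G\<^esub>, \<one>\<^bsub>H\<^esub>) \<rparr>"

definition Ad :: "('a, 'd) monoid_scheme \<Rightarrow> 'a \<Rightarrow> 'a \<Rightarrow> 'a" where
  "Ad M g h = g \<otimes>\<^bsub>M\<^esub> h \<otimes>\<^bsub>M\<^esub> inv\<^bsub>M\<^esub> g"

definition B_sd ::
  "('g, 'd) monoid_scheme \<Rightarrow> ('h, 'c) monoid_scheme \<Rightarrow> ('g \<Rightarrow> 'h \<Rightarrow> 'h)
   \<Rightarrow> ('h \<Rightarrow> 'h) \<Rightarrow> ('g \<Rightarrow> 'g) \<Rightarrow> 'g \<times> 'h \<Rightarrow> 'g \<times> 'h" where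
  "B_sd G H Phi B1 B0 = (\<lambda>(a, p).
     (B0 a, Phi (B0 a) (B1 (Phi (inv\<^bsub>G\<^esub> (B0 a) \<otimes>\<^bsub>G\<^esub> inv\<^bsub>G\<^esub> a) p))))"

definition R_map :: "('a, 'd) monoid_scheme \<Rightarrow> ('a \<Rightarrow> 'a) \<Rightarrow> 'a \<times> 'a \<Rightarrow> 'a \<times> 'a" where
  "R_map M B = (\<lambda>(x, y).
     (let u = Ad M (B x) y
      in (u, Ad M (inv\<^bsub>M\<^esub> (B u) \<otimes>\<^bsub>M\<^esub> inv\<^bsub>M\<^esub> u) x)))"

definition R0 :: "('g, 'd) monoid_scheme \<Rightarrow> ('g \<Rightarrow> 'g) \<Rightarrow> 'g \<times> 'g \<Rightarrow> 'g \<times> 'g" where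
  "R0 G B0 = R_map G B0"

definition R1 ::
  "('g, 'd) monoid_scheme \<Rightarrow> ('h, 'c) monoid_scheme \<Rightarrow> ('g \<Rightarrow> 'h \<Rightarrow> 'h)
   \<Rightarrow> ('h \<Rightarrow> 'h) \<Rightarrow> ('g \<Rightarrow> 'g) \<Rightarrow> ('g \<times> 'h) \<times> ('g \<times> 'h) \<Rightarrow> ('g \<times> 'h) \<times> ('g \<times> 'h)" where
  "R1 G H Phi B1 B0 = R_map (semidirect G H Phi) (B_sd G H Phi B1 B0)"

record ('o, 'm) small_cat =
  cat_ob :: "'o set"
  cat_mor :: "'m set"
  cat_src :: "'m \<Rightarrow> 'o"
  cat_tgt :: "'m \<Rightarrow> 'o"
  cat_comp :: "'m \<Rightarrow> 'm \<Rightarrow> 'm"  \<comment> \<open>cat_comp f g = f o g, defined when tgt g = src f\<close>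
  cat_id :: "'o \<Rightarrow> 'm"

definition prod_cat :: "('o, 'm) small_cat \<Rightarrow> ('p, 'n) small_cat \<Rightarrow> ('o \<times> 'p, 'm \<times> 'n) small_cat" where
  "prod_cat C D =
     \<lparr> cat_ob = cat_ob C \<times> cat_ob D,
       cat_mor = cat_mor C \<times> cat_mor D,
       cat_src = (\<lambda>(f, g). (cat_src C f, cat_src D g)),
       cat_tgt = (\<lambda>(f, g). (cat_tgt C f, cat_tgt D g)),
       cat_comp = (\<lambda>(f, g) (f', g'). (cat_comp C f f', cat_comp D g g')),
       cat_id = (\<lambda>(x, y). (cat_id C x, cat_id D y)) \<rparr>"

definition is_functor ::
  "('o, 'm) small_cat \<Rightarrow> ('p, 'n) small_cat \<Rightarrow> ('m \<Rightarrow> 'n) \<Rightarrow> ('o \<Rightarrow> 'p) \<Rightarrow> bool" where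
  "is_functor C D F1 F0 \<longleftrightarrow>
     F0 \<in> cat_ob C \<rightarrow> cat_ob D \<and> F1 \<in> cat_mor C \<rightarrow> cat_mor D \<and>
     (\<forall>f\<in>cat_mor C. cat_src D (F1 f) = F0 (cat_src C f)) \<and>
     (\<forall>f\<in>cat_mor C. cat_tgt D (F1 f) = F0 (cat_tgt C f)) \<and>
     (\<forall>f\<in>cat_mor C. \<forall>g\<in>cat_mor C. cat_tgt C g = cat_src C f \<longrightarrow>
        F1 (cat_comp C f g) = cat_comp D (F1 f) (F1 g)) \<and>
     (\<forall>x\<in>cat_ob C. F1 (cat_id C x) = cat_id D (F0 x))"

definition invertible_functor ::
  "('o, 'm) small_cat \<Rightarrow> ('p, 'n) small_cat \<Rightarrow> ('m \<Rightarrow> 'n) \<Rightarrow> ('o \<Rightarrow> 'p) \<Rightarrow> bool" where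
  "invertible_functor C D F1 F0 \<longleftrightarrow>
     is_functor C D F1 F0 \<and>
     (\<exists>S1 S0. is_functor D C S1 S0 \<and>
        (\<forall>x\<in>cat_ob C. S0 (F0 x) = x) \<and> (\<forall>y\<in>cat_ob D. F0 (S0 y) = y) \<and>
        (\<forall>f\<in>cat_mor C. S1 (F1 f) = f) \<and> (\<forall>g\<in>cat_mor D. F1 (S1 g) = g))"

definition R_x_Id :: "('a \<times> 'a \<Rightarrow> 'a \<times> 'a) \<Rightarrow> 'a \<times> 'a \<times> 'a \<Rightarrow> 'a \<times> 'a \<times> 'a" where
  "R_x_Id F = (\<lambda>(x, y, z). (fst (F (x, y)), snd (F (x, y)), z))"

definition Id_x_R :: "('a \<times> 'a \<Rightarrow> 'a \<times> 'a) \<Rightarrow> 'a \<times> 'a \<times> 'a \<Rightarrow> 'a \<times> 'a \<times> 'a" where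
  "Id_x_R F = (\<lambda>(x, y, z). (x, F (y, z)))"

definition braid_rel :: "'a set \<Rightarrow> ('a \<times> 'a \<Rightarrow> 'a \<times> 'a) \<Rightarrow> bool" where
  "braid_rel A F \<longleftrightarrow> (\<forall>x\<in>A. \<forall>y\<in>A. \<forall>z\<in>A.
     R_x_Id F (Id_x_R F (R_x_Id F (x, y, z))) = Id_x_R F (R_x_Id F (Id_x_R F (x, y, z))))"

definition categorical_YBE_solution ::
  "('o, 'm) small_cat \<Rightarrow> ('m \<times> 'm \<Rightarrow> 'm \<times> 'm) \<Rightarrow> ('o \<times> 'o \<Rightarrow> 'o \<times> 'o) \<Rightarrow> bool" where
  "categorical_YBE_solution C F1 F0 \<longleftrightarrow>
     invertible_functor (prod_cat C C) (prod_cat C C) F1 F0 \<and>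
     braid_rel (cat_ob C) F0 \<and> braid_rel (cat_mor C) F1"

definition cm_category ::
  "('h, 'c) monoid_scheme \<Rightarrow> ('g, 'd) monoid_scheme \<Rightarrow> ('h \<Rightarrow> 'g) \<Rightarrow> ('g, 'g \<times> 'h) small_cat" where
  "cm_category H G t =
     \<lparr> cat_ob = carrier G,
       cat_mor = carrier G \<times> carrier H,
       cat_src = (\<lambda>(a, p). a),
       cat_tgt = (\<lambda>(a, p). t p \<otimes>\<^bsub>G\<^esub> a),
       cat_comp = (\<lambda>(a, p) (b, q). (b, p \<otimes>\<^bsub>H\<^esub> q)),
       cat_id = (\<lambda>a. (a, \<one>\<^bsub>H\<^esub>)) \<rparr>"

end

theory Submission
  imports Defs
begin


lemma (in group) inv_cancel_l [simp]:
  "x \<in> carrier G \<Longrightarrow> y \<in> carrier G \<Longrightarrow> inv x \<otimes> (x \<otimes> y) = y"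
  by (simp add: m_assoc [symmetric])
lemma (in group) inv_cancel_r [simp]:
  "x \<in> carrier G \<Longrightarrow> y \<in> carrier G \<Longrightarrow> x \<otimes> (inv x \<otimes> y) = y"
  by (simp add: m_assoc [symmetric])

lemmas (in group) gs = m_assoc inv_mult_group

locale rbg = group M for M (structure) +
  fixes B
  assumes Bc [simp]: "x \<in> carrier M \<Longrightarrow> B x \<in> carrier M"
    and RB: "\<lbrakk>a \<in> carrier M; b \<in> carrier M\<rbrakk> \<Longrightarrow> B a \<otimes> B b = B (a \<otimes> B a \<otimes> b \<otimes> inv (B a))"
begin

definition circ where "circ x y = x \<otimes> B x \<otimes> y \<otimes> inv (B x)"
definition lam where "lam x y = B x \<otimes> y \<otimes> inv (B x)"

lemma circ_c [simp]: "x \<in> carrier M \<Longrightarrow> y \<in> carrier M \<Longrightarrow> circ x y \<in> carrier M"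
  by (simp add: circ_def)
lemma lam_c [simp]: "x \<in> carrier M \<Longrightarrow> y \<in> carrier M \<Longrightarrow> lam x y \<in> carrier M"
  by (simp add: lam_def)

lemma B_circ: "x \<in> carrier M \<Longrightarrow> y \<in> carrier M \<Longrightarrow> B (circ x y) = B x \<otimes> B y"
  by (simp add: circ_def RB)

lemma circ_lam: "x \<in> carrier M \<Longrightarrow> y \<in> carrier M \<Longrightarrow> circ x y = x \<otimes> lam x y"
  by (simp add: circ_def lam_def m_assoc)

lemma lam_circ: "x \<in> carrier M \<Longrightarrow> y \<in> carrier M \<Longrightarrow> z \<in> carrier M \<Longrightarrow>
   lam (circ x y) z = lam x (lam y z)"
  by (simp only: lam_def B_circ) (simp add: gs)

lemma lam_mult: "x \<in> carrier M \<Longrightarrow> y \<in> carrier M \<Longrightarrow> z \<in> carrier M \<Longrightarrow>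
   lam x (y \<otimes> z) = lam x y \<otimes> lam x z"
  by (simp add: lam_def gs)

lemma lam_inv: "x \<in> carrier M \<Longrightarrow> y \<in> carrier M \<Longrightarrow> lam x (inv y) = inv (lam x y)"
  by (simp add: lam_def gs)

lemma circ_assoc: "x \<in> carrier M \<Longrightarrow> y \<in> carrier M \<Longrightarrow> z \<in> carrier M \<Longrightarrow>
   circ (circ x y) z = circ x (circ y z)"
  using B_circ[of x y] by (simp add: circ_def gs)

lemma circ_lcancel: "x \<in> carrier M \<Longrightarrow> y \<in> carrier M \<Longrightarrow> z \<in> carrier M \<Longrightarrow>
   circ x y = circ x z \<Longrightarrow> y = z"
  by (simp add: circ_def gs)

definition RR where "RR xy = R_map M B xy"

lemma RR_eq: "RR (x, y) = (lam x y, inv (B (lam x y)) \<otimes> inv (lam x y) \<otimes> x \<otimes> inv (inv (B (lam x y)) \<otimes> inv (lam x y)))"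
  by (simp add: RR_def R_map_def Ad_def lam_def Let_def)

lemma RR_c: "x \<in> carrier M \<Longrightarrow> y \<in> carrier M \<Longrightarrow> fst (RR (x,y)) \<in> carrier M \<and> snd (RR (x,y)) \<in> carrier M"
  by (simp add: RR_eq)

lemma RR_fst: "fst (RR (x,y)) = lam x y" by (simp add: RR_eq)

lemma RR_prod: "x \<in> carrier M \<Longrightarrow> y \<in> carrier M \<Longrightarrow> circ (fst (RR (x,y))) (snd (RR (x,y))) = circ x y"
  by (simp add: RR_eq circ_def lam_def gs)


lemma RR_c1 [simp]: "x \<in> carrier M \<Longrightarrow> y \<in> carrier M \<Longrightarrow> fst (RR (x,y)) \<in> carrier M"
  using RR_c by blast
lemma RR_c2 [simp]: "x \<in> carrier M \<Longrightarrow> y \<in> carrier M \<Longrightarrow> snd (RR (x,y)) \<in> carrier M"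
  using RR_c by blast

lemma lam_circ_self: "a \<in> carrier M \<Longrightarrow> b \<in> carrier M \<Longrightarrow> lam a b = inv a \<otimes> circ a b"
  by (simp add: circ_lam)

lemma braid_RR:
  assumes x: "x \<in> carrier M" and y: "y \<in> carrier M" and z: "z \<in> carrier M"
  shows "R_x_Id RR (Id_x_R RR (R_x_Id RR (x, y, z))) = Id_x_R RR (R_x_Id RR (Id_x_R RR (x, y, z)))"
proof -
  define u1 where "u1 = fst (RR (x,y))"
  define v1 where "v1 = snd (RR (x,y))"
  define u2 where "u2 = fst (RR (v1,z))"
  define w2 where "w2 = snd (RR (v1,z))"
  define u3 where "u3 = fst (RR (u1,u2))"
  define v3 where "v3 = snd (RR (u1,u2))"
  define a1 where "a1 = fst (RR (y,z))"
  define b1 where "b1 = snd (RR (y,z))"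
  define a2 where "a2 = fst (RR (x,a1))"
  define c2 where "c2 = snd (RR (x,a1))"
  define a3 where "a3 = fst (RR (c2,b1))"
  define b3 where "b3 = snd (RR (c2,b1))"
  have c: "u1 \<in> carrier M" "v1 \<in> carrier M" "u2 \<in> carrier M" "w2 \<in> carrier M"
    "u3 \<in> carrier M" "v3 \<in> carrier M" "a1 \<in> carrier M" "b1 \<in> carrier M"
    "a2 \<in> carrier M" "c2 \<in> carrier M" "a3 \<in> carrier M" "b3 \<in> carrier M"
    using x y z by (simp_all add: u1_def v1_def u2_def w2_def u3_def v3_def a1_def b1_def a2_def c2_def a3_def b3_def)
  have p1: "circ u1 v1 = circ x y" using x y by (simp add: u1_def v1_def RR_prod)
  have p2: "circ u2 w2 = circ v1 z" using c z by (simp add: u2_def w2_def RR_prod)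
  have p3: "circ u3 v3 = circ u1 u2" using c by (simp add: u3_def v3_def RR_prod)
  have q1: "circ a1 b1 = circ y z" using y z by (simp add: a1_def b1_def RR_prod)
  have q2: "circ a2 c2 = circ x a1" using c x by (simp add: a2_def c2_def RR_prod)
  have q3: "circ a3 b3 = circ c2 b1" using c by (simp add: a3_def b3_def RR_prod)
  have e1: "u3 = a2"
  proof -
    have "u3 = lam u1 (lam v1 z)" by (simp add: u3_def u2_def RR_fst)
    also have "\<dots> = lam (circ u1 v1) z" using c z by (simp add: lam_circ)
    also have "\<dots> = lam (circ x y) z" by (simp add: p1)
    also have "\<dots> = lam x (lam y z)" using x y z by (simp add: lam_circ)
    also have "\<dots> = a2" by (simp add: a2_def a1_def RR_fst)
    finally show ?thesis .
  qed
  have f1: "circ u3 v3 = u1 \<otimes> a2"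
  proof -
    have "circ u3 v3 = circ u1 u2" by (simp only: p3)
    also have "\<dots> = u1 \<otimes> lam u1 u2" using c by (simp add: circ_lam)
    also have "\<dots> = u1 \<otimes> u3" by (simp add: u3_def RR_fst)
    finally show ?thesis by (simp add: e1)
  qed
  have f2: "circ a2 a3 = u1 \<otimes> a2"
  proof -
    have "circ a2 a3 = a2 \<otimes> lam a2 (lam c2 b1)" using c by (simp add: circ_lam a3_def RR_fst)
    also have "lam a2 (lam c2 b1) = lam (circ a2 c2) b1" using c by (simp add: lam_circ)
    also have "\<dots> = lam x (lam a1 b1)" using c x by (simp add: q2 lam_circ)
    also have "lam a1 b1 = inv a1 \<otimes> (y \<otimes> a1)"
    proof -
      have "lam a1 b1 = inv a1 \<otimes> circ a1 b1" using c(7,8) by (rule lam_circ_self)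
      also have "\<dots> = inv a1 \<otimes> circ y z" by (simp only: q1)
      also have "\<dots> = inv a1 \<otimes> (y \<otimes> a1)" using y z by (simp add: circ_lam a1_def RR_fst)
      finally show ?thesis .
    qed
    also have "lam x (inv a1 \<otimes> (y \<otimes> a1)) = inv a2 \<otimes> (u1 \<otimes> a2)" using c x y
      by (simp add: lam_mult lam_inv a2_def u1_def RR_fst)
    finally show ?thesis using c by (simp add: m_assoc [symmetric])
  qed
  have g: "circ u3 v3 = circ a2 a3" using f1 f2 by simp
  have e3: "v3 = a3" by (rule circ_lcancel[of a2 v3 a3]) (use g c e1 in auto)
  have h1: "circ (circ u3 v3) w2 = circ (circ x y) z"
  proof -
    have "circ (circ u3 v3) w2 = circ (circ u1 u2) w2" by (simp only: p3)
    also have "\<dots> = circ u1 (circ u2 w2)" using c by (simp add: circ_assoc)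
    also have "\<dots> = circ u1 (circ v1 z)" by (simp only: p2)
    also have "\<dots> = circ (circ u1 v1) z" using c z by (simp add: circ_assoc)
    also have "\<dots> = circ (circ x y) z" by (simp only: p1)
    finally show ?thesis .
  qed
  have h2: "circ (circ a2 a3) b3 = circ (circ x y) z"
  proof -
    have "circ (circ a2 a3) b3 = circ a2 (circ a3 b3)" using c by (simp add: circ_assoc)
    also have "\<dots> = circ a2 (circ c2 b1)" by (simp only: q3)
    also have "\<dots> = circ (circ a2 c2) b1" using c by (simp add: circ_assoc)
    also have "\<dots> = circ (circ x a1) b1" by (simp only: q2)
    also have "\<dots> = circ x (circ a1 b1)" using c x by (simp add: circ_assoc)
    also have "\<dots> = circ x (circ y z)" by (simp only: q1)
    also have "\<dots> = circ (circ x y) z" using x y z by (simp add: circ_assoc)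
    finally show ?thesis .
  qed
  have e2: "w2 = b3" by (rule circ_lcancel[of "circ u3 v3" w2 b3]) (use h1 h2 c g in auto)
  have L: "R_x_Id RR (Id_x_R RR (R_x_Id RR (x, y, z))) = (u3, v3, w2)"
    by (simp add: R_x_Id_def Id_x_R_def case_prod_beta u1_def v1_def u2_def w2_def u3_def v3_def)
  have R: "Id_x_R RR (R_x_Id RR (Id_x_R RR (x, y, z))) = (a2, a3, b3)"
    by (simp add: R_x_Id_def Id_x_R_def case_prod_beta a1_def b1_def a2_def c2_def a3_def b3_def)
  show ?thesis unfolding L R by (simp add: e1 e2 e3)
qed


lemma B_one: "B \<one> = \<one>"
proof -
  have "B \<one> \<otimes> B \<one> = B \<one> \<otimes> \<one>" using RB[of \<one> \<one>] by simp
  thus ?thesis by (simp del: r_one)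
qed

definition SS where "SS uv = (let x = Ad M (fst uv \<otimes> B (fst uv)) (snd uv) in (x, Ad M (inv (B x)) (fst uv)))"

lemma SS_c: "u \<in> carrier M \<Longrightarrow> v \<in> carrier M \<Longrightarrow> fst (SS (u,v)) \<in> carrier M \<and> snd (SS (u,v)) \<in> carrier M"
  by (simp add: SS_def Ad_def Let_def)

lemma SS_RR: "x \<in> carrier M \<Longrightarrow> y \<in> carrier M \<Longrightarrow> SS (RR (x,y)) = (x,y)"
  by (simp add: SS_def RR_eq Ad_def Let_def lam_def gs)

lemma RR_SS: "u \<in> carrier M \<Longrightarrow> v \<in> carrier M \<Longrightarrow> RR (SS (u,v)) = (u,v)"
  by (simp add: SS_def RR_eq Ad_def Let_def lam_def gs)

end

lemma RR_hom:
  assumes M: "rbg M B" and N: "rbg N C" and h: "h \<in> hom M N"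
    and hB: "\<And>x. x \<in> carrier M \<Longrightarrow> h (B x) = C (h x)"
    and x: "x \<in> carrier M" and y: "y \<in> carrier M"
  shows "R_map N C (h x, h y) = (h (fst (R_map M B (x,y))), h (snd (R_map M B (x,y))))"
proof -
  interpret M: rbg M B by fact
  interpret N: rbg N C by fact
  interpret gh: group_hom M N h using h by (simp add: group_hom_def group_hom_axioms_def M.group_axioms N.group_axioms)
  show ?thesis using x y by (simp add: R_map_def Ad_def Let_def hB)
qed

lemma SS_hom:
  assumes M: "rbg M B" and N: "rbg N C" and h: "h \<in> hom M N"
    and hB: "\<And>x. x \<in> carrier M \<Longrightarrow> h (B x) = C (h x)"
    and x: "x \<in> carrier M" and y: "y \<in> carrier M"
  shows "rbg.SS N C (h x, h y) = (h (fst (rbg.SS M B (x,y))), h (snd (rbg.SS M B (x,y))))"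
proof -
  interpret M: rbg M B by fact
  interpret N: rbg N C by fact
  interpret gh: group_hom M N h using h by (simp add: group_hom_def group_hom_axioms_def M.group_axioms N.group_axioms)
  show ?thesis using x y by (simp add: M.SS_def N.SS_def Ad_def Let_def hB)
qed



lemma sd_mult [simp]: "(a, p) \<otimes>\<^bsub>semidirect G H Phi\<^esub> (b, q) = (a \<otimes>\<^bsub>G\<^esub> b, p \<otimes>\<^bsub>H\<^esub> Phi a q)"
  by (simp add: semidirect_def)
lemma sd_one [simp]: "\<one>\<^bsub>semidirect G H Phi\<^esub> = (\<one>\<^bsub>G\<^esub>, \<one>\<^bsub>H\<^esub>)"
  by (simp add: semidirect_def)
lemma sd_carrier [simp]: "carrier (semidirect G H Phi) = carrier G \<times> carrier H"
  by (simp add: semidirect_def)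

locale cmrb =
  fixes H :: "('h, 'c) monoid_scheme" and G :: "('g, 'd) monoid_scheme"
    and t :: "'h \<Rightarrow> 'g" and Phi :: "'g \<Rightarrow> 'h \<Rightarrow> 'h"
    and B1 :: "'h \<Rightarrow> 'h" and B0 :: "'g \<Rightarrow> 'g"
  assumes CM: "crossed_module H G t Phi"
    and RBC: "rota_baxter_cm H G t Phi B1 B0"
begin

sublocale H: group H using CM by (simp add: crossed_module_def)
sublocale G: group G using CM by (simp add: crossed_module_def)

lemma t_hom: "t \<in> hom H G" using CM by (simp add: crossed_module_def)
sublocale th: group_hom H G t
  by (simp add: group_hom_def group_hom_axioms_def t_hom H.group_axioms G.group_axioms)

lemma Phi_hom: "a \<in> carrier G \<Longrightarrow> Phi a \<in> hom H H"
  using CM by (auto simp: crossed_module_def iso_def)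

lemma Phi_gh: "a \<in> carrier G \<Longrightarrow> group_hom H H (Phi a)"
  by (simp add: group_hom_def group_hom_axioms_def Phi_hom H.group_axioms)

lemma Phi_c [simp]: "a \<in> carrier G \<Longrightarrow> p \<in> carrier H \<Longrightarrow> Phi a p \<in> carrier H"
  by (rule hom_in_carrier[OF Phi_hom])
lemma Phi_mult [simp]: "a \<in> carrier G \<Longrightarrow> p \<in> carrier H \<Longrightarrow> q \<in> carrier H \<Longrightarrow>
   Phi a (p \<otimes>\<^bsub>H\<^esub> q) = Phi a p \<otimes>\<^bsub>H\<^esub> Phi a q"
  by (rule hom_mult[OF Phi_hom])
lemma Phi_one [simp]: "a \<in> carrier G \<Longrightarrow> Phi a \<one>\<^bsub>H\<^esub> = \<one>\<^bsub>H\<^esub>"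
  by (rule group_hom.hom_one[OF Phi_gh])
lemma Phi_inv [simp]: "a \<in> carrier G \<Longrightarrow> p \<in> carrier H \<Longrightarrow> Phi a (inv\<^bsub>H\<^esub> p) = inv\<^bsub>H\<^esub> (Phi a p)"
  by (rule group_hom.hom_inv[OF Phi_gh])
lemma Phi_comp [simp]: "a \<in> carrier G \<Longrightarrow> b \<in> carrier G \<Longrightarrow> p \<in> carrier H \<Longrightarrow>
   Phi (a \<otimes>\<^bsub>G\<^esub> b) p = Phi a (Phi b p)"
  using CM by (simp add: crossed_module_def)
lemma Phi_1 [simp]: "p \<in> carrier H \<Longrightarrow> Phi \<one>\<^bsub>G\<^esub> p = p"
  using CM by (simp add: crossed_module_def)
lemma Phi_t [simp]: "p \<in> carrier H \<Longrightarrow> q \<in> carrier H \<Longrightarrow> Phi (t p) q = p \<otimes>\<^bsub>H\<^esub> q \<otimes>\<^bsub>H\<^esub> inv\<^bsub>H\<^esub> p"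
  using CM by (simp add: crossed_module_def)
lemma t_Phi [simp]: "a \<in> carrier G \<Longrightarrow> p \<in> carrier H \<Longrightarrow> t (Phi a p) = a \<otimes>\<^bsub>G\<^esub> t p \<otimes>\<^bsub>G\<^esub> inv\<^bsub>G\<^esub> a"
  using CM by (simp add: crossed_module_def)
lemma Phi_inv_Phi [simp]: "a \<in> carrier G \<Longrightarrow> p \<in> carrier H \<Longrightarrow> Phi (inv\<^bsub>G\<^esub> a) (Phi a p) = p"
  by (simp flip: Phi_comp)
lemma Phi_Phi_inv [simp]: "a \<in> carrier G \<Longrightarrow> p \<in> carrier H \<Longrightarrow> Phi a (Phi (inv\<^bsub>G\<^esub> a) p) = p"
  by (simp flip: Phi_comp)

sublocale B1: rbg H B1 using RBC
  by unfold_locales (auto simp: rota_baxter_cm_def rota_baxter_def)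
sublocale B0: rbg G B0 using RBC
  by unfold_locales (auto simp: rota_baxter_cm_def rota_baxter_def)

lemma tB1: "p \<in> carrier H \<Longrightarrow> t (B1 p) = B0 (t p)"
  using RBC by (simp add: rota_baxter_cm_def)
lemma iii: "a \<in> carrier G \<Longrightarrow> p \<in> carrier H \<Longrightarrow>
   Phi (B0 a) (B1 p) = B1 (Phi (a \<otimes>\<^bsub>G\<^esub> B0 a) (p \<otimes>\<^bsub>H\<^esub> B1 p) \<otimes>\<^bsub>H\<^esub> inv\<^bsub>H\<^esub> (Phi (B0 a) (B1 p)))"
  using RBC by (simp add: rota_baxter_cm_def)

abbreviation "K \<equiv> semidirect G H Phi"

lemma K_group: "group K"
proof (rule groupI)
  show "\<And>x y. x \<in> carrier K \<Longrightarrow> y \<in> carrier K \<Longrightarrow> x \<otimes>\<^bsub>K\<^esub> y \<in> carrier K" by auto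
  show "\<one>\<^bsub>K\<^esub> \<in> carrier K" by simp
  show "\<And>x y z. x \<in> carrier K \<Longrightarrow> y \<in> carrier K \<Longrightarrow> z \<in> carrier K \<Longrightarrow>
     x \<otimes>\<^bsub>K\<^esub> y \<otimes>\<^bsub>K\<^esub> z = x \<otimes>\<^bsub>K\<^esub> (y \<otimes>\<^bsub>K\<^esub> z)"
    by (auto simp: G.m_assoc H.m_assoc)
  show "\<And>x. x \<in> carrier K \<Longrightarrow> \<one>\<^bsub>K\<^esub> \<otimes>\<^bsub>K\<^esub> x = x" by auto
  show "\<And>x. x \<in> carrier K \<Longrightarrow> \<exists>y\<in>carrier K. y \<otimes>\<^bsub>K\<^esub> x = \<one>\<^bsub>K\<^esub>"
  proof -
    fix x assume "x \<in> carrier K"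
    then obtain a p where x: "x = (a,p)" "a \<in> carrier G" "p \<in> carrier H" by auto
    show "\<exists>y\<in>carrier K. y \<otimes>\<^bsub>K\<^esub> x = \<one>\<^bsub>K\<^esub>"
      by (rule bexI[of _ "(inv\<^bsub>G\<^esub> a, Phi (inv\<^bsub>G\<^esub> a) (inv\<^bsub>H\<^esub> p))"]) (use x in auto)
  qed
qed

sublocale K: group K by (rule K_group)

lemma K_inv [simp]: "a \<in> carrier G \<Longrightarrow> p \<in> carrier H \<Longrightarrow>
   inv\<^bsub>K\<^esub> (a, p) = (inv\<^bsub>G\<^esub> a, Phi (inv\<^bsub>G\<^esub> a) (inv\<^bsub>H\<^esub> p))"
proof (rule K.inv_equality)
  assume a: "a \<in> carrier G" and p: "p \<in> carrier H"
  have "Phi (inv\<^bsub>G\<^esub> a) (inv\<^bsub>H\<^esub> p) \<otimes>\<^bsub>H\<^esub> Phi (inv\<^bsub>G\<^esub> a) p = \<one>\<^bsub>H\<^esub>"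
    using a p by (simp flip: Phi_mult)
  then show "(inv\<^bsub>G\<^esub> a, Phi (inv\<^bsub>G\<^esub> a) (inv\<^bsub>H\<^esub> p)) \<otimes>\<^bsub>K\<^esub> (a, p) = \<one>\<^bsub>K\<^esub>"
    using a p by (simp del: Phi_inv)
qed (auto)

end

context cmrb begin

lemma Phi_t_inv [simp]: "p \<in> carrier H \<Longrightarrow> q \<in> carrier H \<Longrightarrow> Phi (inv\<^bsub>G\<^esub> (t p)) q = inv\<^bsub>H\<^esub> p \<otimes>\<^bsub>H\<^esub> (q \<otimes>\<^bsub>H\<^esub> p)"
  using Phi_t[of "inv\<^bsub>H\<^esub> p" q] by (simp add: H.m_assoc)

abbreviation "BK \<equiv> B_sd G H Phi B1 B0"

lemma BK_eq: "BK (a,p) = (B0 a, Phi (B0 a) (B1 (Phi (inv\<^bsub>G\<^esub> (B0 a) \<otimes>\<^bsub>G\<^esub> inv\<^bsub>G\<^esub> a) p)))"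
  by (simp add: B_sd_def)

lemma B0_cbar: assumes b: "b \<in> carrier G"
  shows "B0 (inv\<^bsub>G\<^esub> (B0 b) \<otimes>\<^bsub>G\<^esub> inv\<^bsub>G\<^esub> b \<otimes>\<^bsub>G\<^esub> B0 b) = inv\<^bsub>G\<^esub> (B0 b)"
proof -
  let ?b' = "inv\<^bsub>G\<^esub> (B0 b) \<otimes>\<^bsub>G\<^esub> inv\<^bsub>G\<^esub> b \<otimes>\<^bsub>G\<^esub> B0 b"
  have c: "B0.circ b ?b' = \<one>\<^bsub>G\<^esub>" using b by (simp add: B0.circ_def G.m_assoc)
  have "B0 b \<otimes>\<^bsub>G\<^esub> B0 ?b' = \<one>\<^bsub>G\<^esub>"
    using B0.B_circ[of b ?b'] b by (simp add: c B0.B_one)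
  thus ?thesis using b by (metis B0.Bc G.inv_closed G.inv_equality G.inv_inv G.m_closed)
qed

lemma star: assumes b: "b \<in> carrier G" and P: "P \<in> carrier H" and Q: "Q \<in> carrier H"
  shows "Phi (B0 b) (B1 (Phi (inv\<^bsub>G\<^esub> (B0 b)) (Phi (inv\<^bsub>G\<^esub> b) (P \<otimes>\<^bsub>H\<^esub> B1 P)) \<otimes>\<^bsub>H\<^esub> Q
           \<otimes>\<^bsub>H\<^esub> inv\<^bsub>H\<^esub> (Phi (inv\<^bsub>G\<^esub> (B0 b)) (B1 P))))
         = B1 P \<otimes>\<^bsub>H\<^esub> Phi (B0 b) (B1 Q)"
proof -
  define h where "h = B0 b"
  define b' where "b' = inv\<^bsub>G\<^esub> h \<otimes>\<^bsub>G\<^esub> inv\<^bsub>G\<^esub> b \<otimes>\<^bsub>G\<^esub> h"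
  have h: "h \<in> carrier G" using b by (simp add: h_def)
  have b': "b' \<in> carrier G" using b h by (simp add: b'_def)
  have Bb': "B0 b' = inv\<^bsub>G\<^esub> h" using B0_cbar[OF b] by (simp add: b'_def h_def)
  have bb: "b' \<otimes>\<^bsub>G\<^esub> inv\<^bsub>G\<^esub> h = inv\<^bsub>G\<^esub> h \<otimes>\<^bsub>G\<^esub> inv\<^bsub>G\<^esub> b"
    using b h by (simp add: b'_def G.m_assoc)
  define x where "x = Phi (inv\<^bsub>G\<^esub> h) (Phi (inv\<^bsub>G\<^esub> b) (P \<otimes>\<^bsub>H\<^esub> B1 P)) \<otimes>\<^bsub>H\<^esub> inv\<^bsub>H\<^esub> (Phi (inv\<^bsub>G\<^esub> h) (B1 P))"
  have x: "x \<in> carrier H" using b h P by (simp add: x_def)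
  have Bx: "B1 x = Phi (inv\<^bsub>G\<^esub> h) (B1 P)"
    using iii[OF b' P] b h P by (simp add: Bb' bb x_def)
  have "B1 x \<otimes>\<^bsub>H\<^esub> B1 Q = B1 (x \<otimes>\<^bsub>H\<^esub> B1 x \<otimes>\<^bsub>H\<^esub> Q \<otimes>\<^bsub>H\<^esub> inv\<^bsub>H\<^esub> (B1 x))"
    using x Q by (rule B1.RB)
  also have "x \<otimes>\<^bsub>H\<^esub> B1 x \<otimes>\<^bsub>H\<^esub> Q \<otimes>\<^bsub>H\<^esub> inv\<^bsub>H\<^esub> (B1 x) =
     Phi (inv\<^bsub>G\<^esub> h) (Phi (inv\<^bsub>G\<^esub> b) (P \<otimes>\<^bsub>H\<^esub> B1 P)) \<otimes>\<^bsub>H\<^esub> Q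
           \<otimes>\<^bsub>H\<^esub> inv\<^bsub>H\<^esub> (Phi (inv\<^bsub>G\<^esub> h) (B1 P))"
    unfolding Bx using b h P Q by (simp add: x_def H.m_assoc)
  finally have e: "Phi (inv\<^bsub>G\<^esub> h) (B1 P) \<otimes>\<^bsub>H\<^esub> B1 Q = B1 (Phi (inv\<^bsub>G\<^esub> h) (Phi (inv\<^bsub>G\<^esub> b) (P \<otimes>\<^bsub>H\<^esub> B1 P)) \<otimes>\<^bsub>H\<^esub> Q
           \<otimes>\<^bsub>H\<^esub> inv\<^bsub>H\<^esub> (Phi (inv\<^bsub>G\<^esub> h) (B1 P)))" by (simp add: Bx)
  show ?thesis unfolding h_def[symmetric] e[symmetric] using h P Q by simp
qed


lemma star2: assumes b: "b \<in> carrier G" and P: "P \<in> carrier H" and Q: "Q \<in> carrier H"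
  shows "Phi (B0 b) (B1 (Phi (inv\<^bsub>G\<^esub> (B0 b)) (Phi (inv\<^bsub>G\<^esub> b) P) \<otimes>\<^bsub>H\<^esub>
     (Phi (inv\<^bsub>G\<^esub> (B0 b)) (Phi (inv\<^bsub>G\<^esub> b) (B1 P)) \<otimes>\<^bsub>H\<^esub>
      (Q \<otimes>\<^bsub>H\<^esub> inv\<^bsub>H\<^esub> (Phi (inv\<^bsub>G\<^esub> (B0 b)) (B1 P))))))
         = B1 P \<otimes>\<^bsub>H\<^esub> Phi (B0 b) (B1 Q)"
  using star[OF b P Q] b P Q by (simp add: H.m_assoc)

lemma BK_RB_aux: assumes a: "a \<in> carrier G" and b: "b \<in> carrier G" and P: "P \<in> carrier H" and Q: "Q \<in> carrier H"
  shows "BK (a, Phi (a \<otimes>\<^bsub>G\<^esub> B0 a) P) \<otimes>\<^bsub>K\<^esub> BK (b, Phi (b \<otimes>\<^bsub>G\<^esub> B0 b) Q) =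
    BK ((a, Phi (a \<otimes>\<^bsub>G\<^esub> B0 a) P) \<otimes>\<^bsub>K\<^esub> BK (a, Phi (a \<otimes>\<^bsub>G\<^esub> B0 a) P) \<otimes>\<^bsub>K\<^esub> (b, Phi (b \<otimes>\<^bsub>G\<^esub> B0 b) Q) \<otimes>\<^bsub>K\<^esub> inv\<^bsub>K\<^esub> (BK (a, Phi (a \<otimes>\<^bsub>G\<^esub> B0 a) P)))"
proof -
  have rb: "B0 (a \<otimes>\<^bsub>G\<^esub> (B0 a \<otimes>\<^bsub>G\<^esub> (b \<otimes>\<^bsub>G\<^esub> inv\<^bsub>G\<^esub> (B0 a)))) = B0 a \<otimes>\<^bsub>G\<^esub> B0 b"
    using B0.RB[OF a b] a b by (simp add: G.m_assoc)
  show ?thesis using a b P Q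
    apply (simp add: BK_eq G.m_assoc rb G.inv_mult_group H.inv_mult_group H.m_assoc star2)
    done
qed


lemma BK_c [simp]: "Z \<in> carrier K \<Longrightarrow> BK Z \<in> carrier K"
  by (auto simp: B_sd_def)

lemma BK_RB: assumes U: "U \<in> carrier K" and V: "V \<in> carrier K"
  shows "BK U \<otimes>\<^bsub>K\<^esub> BK V = BK (U \<otimes>\<^bsub>K\<^esub> BK U \<otimes>\<^bsub>K\<^esub> V \<otimes>\<^bsub>K\<^esub> inv\<^bsub>K\<^esub> (BK U))"
proof -
  obtain a p b q where XY: "U = (a,p)" "V = (b,q)" and c: "a \<in> carrier G" "p \<in> carrier H" "b \<in> carrier G" "q \<in> carrier H"
    using U V by auto
  define P where "P = Phi (inv\<^bsub>G\<^esub> (a \<otimes>\<^bsub>G\<^esub> B0 a)) p"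
  define Q where "Q = Phi (inv\<^bsub>G\<^esub> (b \<otimes>\<^bsub>G\<^esub> B0 b)) q"
  have p: "p = Phi (a \<otimes>\<^bsub>G\<^esub> B0 a) P" using c by (simp add: P_def del: Phi_comp)
  have q: "q = Phi (b \<otimes>\<^bsub>G\<^esub> B0 b) Q" using c by (simp add: Q_def del: Phi_comp)
  show ?thesis unfolding XY p q
    by (rule BK_RB_aux) (use c in \<open>simp_all add: P_def Q_def\<close>)
qed

sublocale BKr: rbg K BK
  by unfold_locales (use BK_c in auto, simp add: BK_RB)

lemma BK_fst: "fst (BK U) = B0 (fst U)" by (simp add: B_sd_def split: prod.splits)

definition tau where "tau U = t (snd U) \<otimes>\<^bsub>G\<^esub> fst U"
definition iota where "iota a = (a, \<one>\<^bsub>H\<^esub>)"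

lemma fst_hom: "fst \<in> hom K G" by (rule homI) auto
lemma tau_hom: "tau \<in> hom K G"
  by (rule homI) (auto simp: tau_def G.m_assoc)
lemma iota_hom: "iota \<in> hom G K"
  by (rule homI) (auto simp: iota_def)

lemma BK_tau: assumes U: "U \<in> carrier K" shows "tau (BK U) = B0 (tau U)"
proof -
  obtain a p where XY: "U = (a,p)" and c: "a \<in> carrier G" "p \<in> carrier H"
    using U by auto
  define P where "P = Phi (inv\<^bsub>G\<^esub> (a \<otimes>\<^bsub>G\<^esub> B0 a)) p"
  have p: "p = Phi (a \<otimes>\<^bsub>G\<^esub> B0 a) P" using c by (simp add: P_def del: Phi_comp)
  have P: "P \<in> carrier H" using c by (simp add: P_def)
  have rb: "B0 a \<otimes>\<^bsub>G\<^esub> B0 (t P) = B0 (t p \<otimes>\<^bsub>G\<^esub> a)"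
    using B0.RB[of a "t P"] c P unfolding p by (simp add: G.m_assoc)
  show ?thesis unfolding XY tau_def using c P
    apply (simp add: BK_eq tB1 G.m_assoc flip: rb)
    apply (simp add: p G.m_assoc)
    done
qed

lemma BK_iota: "a \<in> carrier G \<Longrightarrow> BK (iota a) = iota (B0 a)"
  by (simp add: iota_def BK_eq B1.B_one)


lemma BK_comp: assumes a: "a \<in> carrier G" and p1: "p1 \<in> carrier H" and p2: "p2 \<in> carrier H"
  shows "BK (a, p1 \<otimes>\<^bsub>H\<^esub> p2) = (B0 a, snd (BK (t p2 \<otimes>\<^bsub>G\<^esub> a, p1)) \<otimes>\<^bsub>H\<^esub> snd (BK (a, p2)))"
proof -
  define P1 where "P1 = Phi (inv\<^bsub>G\<^esub> (a \<otimes>\<^bsub>G\<^esub> B0 a)) p1"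
  define P2 where "P2 = Phi (inv\<^bsub>G\<^esub> (a \<otimes>\<^bsub>G\<^esub> B0 a)) p2"
  have q1: "p1 = Phi (a \<otimes>\<^bsub>G\<^esub> B0 a) P1" using a p1 by (simp add: P1_def del: Phi_comp)
  have q2: "p2 = Phi (a \<otimes>\<^bsub>G\<^esub> B0 a) P2" using a p2 by (simp add: P2_def del: Phi_comp)
  have P: "P1 \<in> carrier H" "P2 \<in> carrier H" using a p1 p2 by (simp_all add: P1_def P2_def)
  have rb: "B0 (a \<otimes>\<^bsub>G\<^esub> (B0 a \<otimes>\<^bsub>G\<^esub> (t P2 \<otimes>\<^bsub>G\<^esub> inv\<^bsub>G\<^esub> (B0 a)))) = B0 a \<otimes>\<^bsub>G\<^esub> t (B1 P2)"
    using B0.RB[of a "t P2"] a P by (simp add: G.m_assoc tB1)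
  have rbH: "B1 P2 \<otimes>\<^bsub>H\<^esub> B1 (inv\<^bsub>H\<^esub> (B1 P2) \<otimes>\<^bsub>H\<^esub> (inv\<^bsub>H\<^esub> P2 \<otimes>\<^bsub>H\<^esub> (P1 \<otimes>\<^bsub>H\<^esub> (P2 \<otimes>\<^bsub>H\<^esub> B1 P2))))
     = B1 (P1 \<otimes>\<^bsub>H\<^esub> P2)"
    using B1.RB[of P2 "inv\<^bsub>H\<^esub> (B1 P2) \<otimes>\<^bsub>H\<^esub> (inv\<^bsub>H\<^esub> P2 \<otimes>\<^bsub>H\<^esub> (P1 \<otimes>\<^bsub>H\<^esub> (P2 \<otimes>\<^bsub>H\<^esub> B1 P2)))"] P
    by (simp add: H.m_assoc)
  show ?thesis using a P unfolding q1 q2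
    apply (simp add: BK_eq G.m_assoc G.inv_mult_group H.inv_mult_group H.m_assoc rb)
    apply (simp add: rbH flip: Phi_mult)
    done
qed

end

context cmrb begin

definition comp where "comp f g = (fst g, snd f \<otimes>\<^bsub>H\<^esub> snd g)"
definition cp where "cp f g \<longleftrightarrow> f \<in> carrier K \<and> g \<in> carrier K \<and> tau g = fst f"

lemma tau_c [simp]: "f \<in> carrier K \<Longrightarrow> tau f \<in> carrier G"
  by (auto simp: tau_def)

lemma tau_mult: "f \<in> carrier K \<Longrightarrow> g \<in> carrier K \<Longrightarrow> tau (f \<otimes>\<^bsub>K\<^esub> g) = tau f \<otimes>\<^bsub>G\<^esub> tau g"
  using tau_hom by (simp add: hom_mult)
lemma tau_inv: "f \<in> carrier K \<Longrightarrow> tau (inv\<^bsub>K\<^esub> f) = inv\<^bsub>G\<^esub> (tau f)"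
  using tau_hom by (simp add: group_hom.hom_inv group_hom_def group_hom_axioms_def K.group_axioms G.group_axioms)

lemma comp_c: "cp f g \<Longrightarrow> comp f g \<in> carrier K"
  by (auto simp: cp_def comp_def)

lemma cp_mult: "cp f g \<Longrightarrow> cp f' g' \<Longrightarrow> cp (f \<otimes>\<^bsub>K\<^esub> f') (g \<otimes>\<^bsub>K\<^esub> g')"
  unfolding cp_def by (auto simp: tau_mult simp del: sd_carrier) (auto simp: tau_def)

lemma comp_mult: assumes "cp f g" "cp f' g'"
  shows "comp f g \<otimes>\<^bsub>K\<^esub> comp f' g' = comp (f \<otimes>\<^bsub>K\<^esub> f') (g \<otimes>\<^bsub>K\<^esub> g')"
proof -
  obtain a p b q where f: "f = (a,p)" "g = (b,q)" and c: "a \<in> carrier G" "p \<in> carrier H" "b \<in> carrier G" "q \<in> carrier H"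
    and ab: "a = t q \<otimes>\<^bsub>G\<^esub> b"
    using assms(1) by (auto simp: cp_def tau_def)
  obtain a' p' b' q' where f': "f' = (a',p')" "g' = (b',q')" and c': "a' \<in> carrier G" "p' \<in> carrier H" "b' \<in> carrier G" "q' \<in> carrier H"
    using assms(2) by (auto simp: cp_def tau_def)
  show ?thesis unfolding f f' comp_def using c c' by (simp add: ab H.m_assoc)
qed

lemma cp_inv: "cp f g \<Longrightarrow> cp (inv\<^bsub>K\<^esub> f) (inv\<^bsub>K\<^esub> g)"
  unfolding cp_def by (simp add: tau_inv del: sd_carrier K_inv) (auto)

lemma comp_inv: assumes "cp f g"
  shows "inv\<^bsub>K\<^esub> (comp f g) = comp (inv\<^bsub>K\<^esub> f) (inv\<^bsub>K\<^esub> g)"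
proof -
  obtain a p b q where f: "f = (a,p)" "g = (b,q)" and c: "a \<in> carrier G" "p \<in> carrier H" "b \<in> carrier G" "q \<in> carrier H"
    and ab: "a = t q \<otimes>\<^bsub>G\<^esub> b"
    using assms(1) by (auto simp: cp_def tau_def)
  show ?thesis unfolding f comp_def using c by (simp add: ab H.m_assoc G.inv_mult_group H.inv_mult_group)
qed

lemma cp_B: "cp f g \<Longrightarrow> cp (BK f) (BK g)"
  unfolding cp_def using BK_tau BK_c by (auto simp: BK_fst simp del: sd_carrier)

lemma comp_B: assumes "cp f g" shows "BK (comp f g) = comp (BK f) (BK g)"
proof -
  obtain a p b q where f: "f = (a,p)" "g = (b,q)" and c: "a \<in> carrier G" "p \<in> carrier H" "b \<in> carrier G" "q \<in> carrier H"
    and ab: "a = t q \<otimes>\<^bsub>G\<^esub> b"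
    using assms(1) by (auto simp: cp_def tau_def)
  show ?thesis unfolding f comp_def using c BK_comp[of b p q] by (simp add: ab BK_fst)
qed

lemma cp_Ad: "cp f g \<Longrightarrow> cp f' g' \<Longrightarrow> cp (Ad K f f') (Ad K g g')"
  unfolding Ad_def by (intro cp_mult cp_inv)

lemma comp_Ad: "cp f g \<Longrightarrow> cp f' g' \<Longrightarrow> Ad K (comp f g) (comp f' g') = comp (Ad K f f') (Ad K g g')"
  unfolding Ad_def by (simp add: comp_inv comp_mult cp_mult cp_inv)


lemmas cps = comp_B cp_B comp_Ad cp_Ad comp_inv cp_inv comp_mult cp_mult

lemma RK_comp: assumes "cp x x'" "cp y y'"
  shows "R_map K BK (comp x x', comp y y') =
    (comp (fst (R_map K BK (x,y))) (fst (R_map K BK (x',y'))), comp (snd (R_map K BK (x,y))) (snd (R_map K BK (x',y'))))"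
  using assms by (simp add: R_map_def Let_def cps)

lemma SK_comp: assumes "cp x x'" "cp y y'"
  shows "BKr.SS (comp x x', comp y y') =
    (comp (fst (BKr.SS (x,y))) (fst (BKr.SS (x',y'))), comp (snd (BKr.SS (x,y))) (snd (BKr.SS (x',y'))))"
  using assms by (simp add: BKr.SS_def Let_def cps)


abbreviation "CC \<equiv> cm_category H G t"

lemma CC_src: "cat_src CC = fst" by (auto simp: cm_category_def)
lemma CC_tgt: "cat_tgt CC = tau" by (auto simp: cm_category_def tau_def)
lemma CC_comp: "cat_comp CC = comp" by (auto simp: cm_category_def comp_def fun_eq_iff)
lemma CC_id: "cat_id CC = iota" by (auto simp: cm_category_def iota_def)

lemma functor_from:
  assumes F0c: "\<And>a b. a \<in> carrier G \<Longrightarrow> b \<in> carrier G \<Longrightarrow> F0 (a,b) \<in> carrier G \<times> carrier G"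
    and F1c: "\<And>x y. x \<in> carrier K \<Longrightarrow> y \<in> carrier K \<Longrightarrow> F1 (x,y) \<in> carrier K \<times> carrier K"
    and Ffst: "\<And>x y. x \<in> carrier K \<Longrightarrow> y \<in> carrier K \<Longrightarrow> F0 (fst x, fst y) = (fst (fst (F1 (x,y))), fst (snd (F1 (x,y))))"
    and Ftau: "\<And>x y. x \<in> carrier K \<Longrightarrow> y \<in> carrier K \<Longrightarrow> F0 (tau x, tau y) = (tau (fst (F1 (x,y))), tau (snd (F1 (x,y))))"
    and Fiota: "\<And>a b. a \<in> carrier G \<Longrightarrow> b \<in> carrier G \<Longrightarrow> F1 (iota a, iota b) = (iota (fst (F0 (a,b))), iota (snd (F0 (a,b))))"
    and Fcomp: "\<And>x x' y y'. cp x x' \<Longrightarrow> cp y y' \<Longrightarrow> F1 (comp x x', comp y y') =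
       (comp (fst (F1 (x,y))) (fst (F1 (x',y'))), comp (snd (F1 (x,y))) (snd (F1 (x',y'))))"
  shows "is_functor (prod_cat CC CC) (prod_cat CC CC) F1 F0"
  unfolding is_functor_def
proof (intro conjI)
  show "F0 \<in> cat_ob (prod_cat CC CC) \<rightarrow> cat_ob (prod_cat CC CC)"
    using F0c by (auto simp: prod_cat_def cm_category_def)
  show "F1 \<in> cat_mor (prod_cat CC CC) \<rightarrow> cat_mor (prod_cat CC CC)"
  proof
    fix f assume "f \<in> cat_mor (prod_cat CC CC)"
    then obtain x y where "f = (x,y)" "x \<in> carrier K" "y \<in> carrier K"
      by (auto simp: prod_cat_def cm_category_def)
    then show "F1 f \<in> cat_mor (prod_cat CC CC)" using F1c[of x y]
      by (simp add: prod_cat_def cm_category_def)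
  qed
  show "\<forall>f\<in>cat_mor (prod_cat CC CC). cat_src (prod_cat CC CC) (F1 f) = F0 (cat_src (prod_cat CC CC) f)"
  proof
    fix f assume "f \<in> cat_mor (prod_cat CC CC)"
    then obtain x y where "f = (x,y)" "x \<in> carrier K" "y \<in> carrier K"
      by (auto simp: prod_cat_def cm_category_def)
    then show "cat_src (prod_cat CC CC) (F1 f) = F0 (cat_src (prod_cat CC CC) f)" using Ffst[of x y]
      by (simp add: prod_cat_def CC_src split: prod.splits del: sd_carrier)
  qed
  show "\<forall>f\<in>cat_mor (prod_cat CC CC). cat_tgt (prod_cat CC CC) (F1 f) = F0 (cat_tgt (prod_cat CC CC) f)"
  proof
    fix f assume "f \<in> cat_mor (prod_cat CC CC)"
    then obtain x y where "f = (x,y)" "x \<in> carrier K" "y \<in> carrier K"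
      by (auto simp: prod_cat_def cm_category_def)
    then show "cat_tgt (prod_cat CC CC) (F1 f) = F0 (cat_tgt (prod_cat CC CC) f)" using Ftau[of x y]
      by (simp add: prod_cat_def CC_tgt split: prod.splits del: sd_carrier)
  qed
  show "\<forall>f\<in>cat_mor (prod_cat CC CC). \<forall>g\<in>cat_mor (prod_cat CC CC).
     cat_tgt (prod_cat CC CC) g = cat_src (prod_cat CC CC) f \<longrightarrow>
     F1 (cat_comp (prod_cat CC CC) f g) = cat_comp (prod_cat CC CC) (F1 f) (F1 g)"
  proof (intro ballI impI)
    fix f g assume fm: "f \<in> cat_mor (prod_cat CC CC)" and gm: "g \<in> cat_mor (prod_cat CC CC)"
      and e: "cat_tgt (prod_cat CC CC) g = cat_src (prod_cat CC CC) f"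
    from fm gm obtain x y x' y' where fg: "f = (x,y)" "x \<in> carrier K" "y \<in> carrier K"
       "g = (x',y')" "x' \<in> carrier K" "y' \<in> carrier K"
      by (auto simp: prod_cat_def cm_category_def)
    have cp: "cp x x'" "cp y y'" using e fg by (auto simp: cp_def prod_cat_def CC_src CC_tgt simp del: sd_carrier)
    show "F1 (cat_comp (prod_cat CC CC) f g) = cat_comp (prod_cat CC CC) (F1 f) (F1 g)"
      using Fcomp[OF cp] fg by (simp add: prod_cat_def CC_comp split: prod.splits del: sd_carrier)
  qed
  show "\<forall>z\<in>cat_ob (prod_cat CC CC). F1 (cat_id (prod_cat CC CC) z) = cat_id (prod_cat CC CC) (F0 z)"
  proof
    fix z assume "z \<in> cat_ob (prod_cat CC CC)"
    then obtain a b where "z = (a,b)" "a \<in> carrier G" "b \<in> carrier G"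
      by (auto simp: prod_cat_def cm_category_def)
    then show "F1 (cat_id (prod_cat CC CC) z) = cat_id (prod_cat CC CC) (F0 z)" using Fiota[of a b]
      by (simp add: prod_cat_def CC_id split: prod.splits)
  qed
qed


lemma rbgK: "rbg K BK" by unfold_locales (use BK_c in auto, simp add: BK_RB)
lemma rbgG: "rbg G B0" by unfold_locales (simp_all add: B0.RB)

lemma main: "categorical_YBE_solution CC (R_map K BK) (R_map G B0)"
  unfolding categorical_YBE_solution_def invertible_functor_def
proof (intro conjI exI)
  show "is_functor (prod_cat CC CC) (prod_cat CC CC) (R_map K BK) (R_map G B0)"
  proof (rule functor_from)
    show "\<And>a b. a \<in> carrier G \<Longrightarrow> b \<in> carrier G \<Longrightarrow> R_map G B0 (a,b) \<in> carrier G \<times> carrier G"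
      using B0.RR_c unfolding B0.RR_def by (metis mem_Sigma_iff prod.collapse)
    show "\<And>x y. x \<in> carrier K \<Longrightarrow> y \<in> carrier K \<Longrightarrow> R_map K BK (x,y) \<in> carrier K \<times> carrier K"
      using BKr.RR_c unfolding BKr.RR_def by (metis mem_Sigma_iff prod.collapse)
    show "\<And>x y. x \<in> carrier K \<Longrightarrow> y \<in> carrier K \<Longrightarrow> R_map G B0 (fst x, fst y) = (fst (fst (R_map K BK (x,y))), fst (snd (R_map K BK (x,y))))"
      by (rule RR_hom[OF rbgK rbgG fst_hom]) (simp_all add: BK_fst)
    show "\<And>x y. x \<in> carrier K \<Longrightarrow> y \<in> carrier K \<Longrightarrow> R_map G B0 (tau x, tau y) = (tau (fst (R_map K BK (x,y))), tau (snd (R_map K BK (x,y))))"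
      by (rule RR_hom[OF rbgK rbgG tau_hom]) (simp_all add: BK_tau)
    show "\<And>a b. a \<in> carrier G \<Longrightarrow> b \<in> carrier G \<Longrightarrow> R_map K BK (iota a, iota b) = (iota (fst (R_map G B0 (a,b))), iota (snd (R_map G B0 (a,b))))"
      by (rule RR_hom[OF rbgG rbgK iota_hom]) (simp_all add: BK_iota)
    show "\<And>x x' y y'. cp x x' \<Longrightarrow> cp y y' \<Longrightarrow> R_map K BK (comp x x', comp y y') =
       (comp (fst (R_map K BK (x,y))) (fst (R_map K BK (x',y'))), comp (snd (R_map K BK (x,y))) (snd (R_map K BK (x',y'))))"
      by (rule RK_comp)
  qed
  show "is_functor (prod_cat CC CC) (prod_cat CC CC) BKr.SS B0.SS"
  proof (rule functor_from)
    show "\<And>a b. a \<in> carrier G \<Longrightarrow> b \<in> carrier G \<Longrightarrow> B0.SS (a,b) \<in> carrier G \<times> carrier G"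
      using B0.SS_c by (metis mem_Sigma_iff prod.collapse)
    show "\<And>x y. x \<in> carrier K \<Longrightarrow> y \<in> carrier K \<Longrightarrow> BKr.SS (x,y) \<in> carrier K \<times> carrier K"
      using BKr.SS_c by (metis mem_Sigma_iff prod.collapse)
    show "\<And>x y. x \<in> carrier K \<Longrightarrow> y \<in> carrier K \<Longrightarrow> B0.SS (fst x, fst y) = (fst (fst (BKr.SS (x,y))), fst (snd (BKr.SS (x,y))))"
      by (rule SS_hom[OF rbgK rbgG fst_hom]) (simp_all add: BK_fst)
    show "\<And>x y. x \<in> carrier K \<Longrightarrow> y \<in> carrier K \<Longrightarrow> B0.SS (tau x, tau y) = (tau (fst (BKr.SS (x,y))), tau (snd (BKr.SS (x,y))))"
      by (rule SS_hom[OF rbgK rbgG tau_hom]) (simp_all add: BK_tau)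
    show "\<And>a b. a \<in> carrier G \<Longrightarrow> b \<in> carrier G \<Longrightarrow> BKr.SS (iota a, iota b) = (iota (fst (B0.SS (a,b))), iota (snd (B0.SS (a,b))))"
      by (rule SS_hom[OF rbgG rbgK iota_hom]) (simp_all add: BK_iota)
    show "\<And>x x' y y'. cp x x' \<Longrightarrow> cp y y' \<Longrightarrow> BKr.SS (comp x x', comp y y') =
       (comp (fst (BKr.SS (x,y))) (fst (BKr.SS (x',y'))), comp (snd (BKr.SS (x,y))) (snd (BKr.SS (x',y'))))"
      by (rule SK_comp)
  qed
  show "\<forall>x\<in>cat_ob (prod_cat CC CC). B0.SS (R_map G B0 x) = x"
    using B0.SS_RR by (auto simp: prod_cat_def cm_category_def B0.RR_def)
  show "\<forall>x\<in>cat_ob (prod_cat CC CC). R_map G B0 (B0.SS x) = x"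
    using B0.RR_SS by (auto simp: prod_cat_def cm_category_def B0.RR_def)
  show "\<forall>x\<in>cat_mor (prod_cat CC CC). BKr.SS (R_map K BK x) = x"
    using BKr.SS_RR unfolding BKr.RR_def by (auto simp: prod_cat_def cm_category_def)
  show "\<forall>x\<in>cat_mor (prod_cat CC CC). R_map K BK (BKr.SS x) = x"
    using BKr.RR_SS unfolding BKr.RR_def by (auto simp: prod_cat_def cm_category_def)
  show "braid_rel (cat_ob CC) (R_map G B0)"
    using B0.braid_RR unfolding B0.RR_def[abs_def] by (simp add: braid_rel_def cm_category_def)
  show "braid_rel (cat_mor CC) (R_map K BK)"
    using BKr.braid_RR unfolding BKr.RR_def[abs_def] by (simp add: braid_rel_def cm_category_def)
qed

end

theorem theorem3p3:
  fixes H :: "('h, 'c) monoid_scheme" and G :: "('g, 'd) monoid_scheme"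
    and t :: "'h \<Rightarrow> 'g" and Phi :: "'g \<Rightarrow> 'h \<Rightarrow> 'h"
    and B1 :: "'h \<Rightarrow> 'h" and B0 :: "'g \<Rightarrow> 'g"
  assumes "crossed_module H G t Phi"
    and "rota_baxter_cm H G t Phi B1 B0"
  shows "categorical_YBE_solution (cm_category H G t) (R1 G H Phi B1 B0) (R0 G B0)"
proof -
  interpret cmrb H G t Phi B1 B0 using assms by unfold_locales
  show ?thesis using main by (simp add: R1_def R0_def)
qed

end
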